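(* Consider the Galton–Watson process with types $\{1,2,\dots\}$ and progeny generating functions $P_i(\boldsymbol s)=\tfrac{19}{30}s_{i+1}^3+\tfrac{11}{30}$ for $i\ne10$ and $P_{10}(\boldsymbol s)=\tfrac25 s_{10}^4+\tfrac15 s_{11}^4+\tfrac25$. Then $\bar\nu=\lim_{k\to\infty}\mathrm{sp}(M^{(k)})=1.6>1$, and the partial extinction probabilities satisfy $\tilde q_i<1$ for $1\le i\le10$ and $\tilde q_i=1$ for $i\ge11$.
   Context: A Galton–Watson process with types $\{1,2,\dots\}$ is $\{\mathcal Z_n=(Z_{n1},Z_{n2},\dots)\}$, $Z_{n\ell}$ the number of type-$\ell$ individuals in generation $n$, started from one individual of type $\varphi_0$; $P_i(\boldsymbol s)$ is the probability generating function of the offspring vector of a type-$i$ individual, $M_{ij}=\partial P_i/\partial s_j|_{\boldsymbol s=\boldsymbol 1}$, $M^{(k)}=(M_{ij})_{1\le i,j\le k}$, and $\mathrm{sp}$ is the spectral radius. Partial extinction: $\tilde q_i=\mathbb P[\forall\ell:\lim_n Z_{n\ell}=0\mid\varphi_0=i]$. *)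

theory Defs
  imports "HOL-Probability.Probability" "Jordan_Normal_Form.Spectral_Radius"
begin

text \<open>Types are the positive integers 1,2,...; a population (generation) is a
  function nat => nat giving the number of individuals of each type
  (index 0 is never used by the process started from a type >= 1).\<close>

definition unit_vec :: "nat \<Rightarrow> nat \<Rightarrow> nat \<Rightarrow> nat" where
  "unit_vec c j = (\<lambda>l. if l = j then c else 0)"

text \<open>Offspring distribution of a type-i individual, read off from the
  progeny generating functions
  P_i(s) = 19/30 s_{i+1}^3 + 11/30 (i ~= 10),
  P_10(s) = 2/5 s_10^4 + 1/5 s_11^4 + 2/5.\<close>
definition offspring :: "nat \<Rightarrow> (nat \<Rightarrow> nat) pmf" where
  "offspring i =
     (if i = 10 then pmf_of_list [(unit_vec 4 10, 2/5), (unit_vec 4 11, 1/5), (\<lambda>_. 0, 2/5)]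
      else pmf_of_list [(unit_vec 3 (i+1), 19/30), (\<lambda>_. 0, 11/30)])"

definition conv_pmf :: "(nat \<Rightarrow> nat) pmf \<Rightarrow> (nat \<Rightarrow> nat) pmf \<Rightarrow> (nat \<Rightarrow> nat) pmf" where
  "conv_pmf p q = bind_pmf p (\<lambda>a. map_pmf (\<lambda>b. (\<lambda>l. a l + b l)) q)"

fun conv_pow :: "nat \<Rightarrow> (nat \<Rightarrow> nat) pmf \<Rightarrow> (nat \<Rightarrow> nat) pmf" where
  "conv_pow 0 p = return_pmf (\<lambda>_. 0)"
| "conv_pow (Suc c) p = conv_pmf (conv_pow c p) p"

fun gen_pmf :: "nat \<Rightarrow> (nat \<Rightarrow> nat) \<Rightarrow> (nat \<Rightarrow> nat) pmf" where
  "gen_pmf 0 z = return_pmf (\<lambda>_. 0)"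
| "gen_pmf (Suc N) z = conv_pmf (gen_pmf N z) (conv_pow (z N) (offspring N))"

definition GW_kernel :: "(nat \<Rightarrow> nat) \<Rightarrow> (nat \<Rightarrow> nat) pmf" where
  "GW_kernel z = gen_pmf (LEAST N. \<forall>l\<ge>N. z l = 0) z"

definition is_GW_process :: "'a measure \<Rightarrow> (nat \<Rightarrow> 'a \<Rightarrow> nat \<Rightarrow> nat) \<Rightarrow> nat \<Rightarrow> bool" where
  "is_GW_process M Z i \<longleftrightarrow>
     prob_space M \<and>
     (\<forall>n. Z n \<in> measurable M (count_space UNIV)) \<and>
     (AE \<omega> in M. Z 0 \<omega> = unit_vec 1 i) \<and>
     (\<forall>n (h :: nat \<Rightarrow> nat \<Rightarrow> nat) z.
        measure M {\<omega> \<in> space M. (\<forall>m\<le>n. Z m \<omega> = h m) \<and> Z (Suc n) \<omega> = z}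
        = measure M {\<omega> \<in> space M. \<forall>m\<le>n. Z m \<omega> = h m} * pmf (GW_kernel (h n)) z)"

text \<open>Mean matrix M_ij = dP_i/ds_j (1) = expected number of type-j children of a type-i individual.\<close>
definition mean_matrix :: "nat \<Rightarrow> nat \<Rightarrow> real" where
  "mean_matrix i j = measure_pmf.expectation (offspring i) (\<lambda>v. real (v j))"

text \<open>Truncation M^(k) = (M_ij)_{1<=i,j<=k}, as a complex k x k matrix.\<close>
definition trunc_mean :: "nat \<Rightarrow> complex mat" where
  "trunc_mean k = mat k k (\<lambda>(i, j). complex_of_real (mean_matrix (i+1) (j+1)))"

definition partial_extinction :: "'a measure \<Rightarrow> (nat \<Rightarrow> 'a \<Rightarrow> nat \<Rightarrow> nat) \<Rightarrow> 'a set" where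
  "partial_extinction M Z = {\<omega> \<in> space M. \<forall>l. (\<lambda>n. Z n \<omega> l) \<longlonglongrightarrow> 0}"

end

theory Submission
  imports Defs
begin


lemma uv_apply[simp]: "unit_vec c j l = (if l = j then c else 0)"
  by (simp add: unit_vec_def)

lemma uv_ne0: "c > 0 \<Longrightarrow> unit_vec c j \<noteq> (\<lambda>_. 0)"
  by (auto simp: fun_eq_iff intro: exI[of _ j])
lemma uv_ne0': "c > 0 \<Longrightarrow> (\<lambda>_. 0) \<noteq> unit_vec c j"
  using uv_ne0 by metis

lemma uv_inj: "c > 0 \<Longrightarrow> j \<noteq> k \<Longrightarrow> unit_vec c j \<noteq> unit_vec c k"
  by (auto simp: fun_eq_iff dest: spec[of _ j])

lemma wf10: "pmf_of_list_wf [(unit_vec 4 10, 2/5::real), (unit_vec 4 11, 1/5), (\<lambda>_. 0::nat, 2/5)]"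
  by (rule pmf_of_list_wfI) auto
lemma wfo: "pmf_of_list_wf [(unit_vec 3 (i+1), 19/30::real), (\<lambda>_. 0::nat, 11/30)]"
  by (rule pmf_of_list_wfI) auto

lemma set_offspring: "set_pmf (offspring i) =
  (if i = 10 then {unit_vec 4 10, unit_vec 4 11, \<lambda>_. 0} else {unit_vec 3 (i+1), \<lambda>_. 0})"
proof -
  have a: "set_pmf (pmf_of_list [(unit_vec 4 10, 2/5::real), (unit_vec 4 11, 1/5), (\<lambda>_. 0::nat, 2/5)])
     = {unit_vec 4 10, unit_vec 4 11, \<lambda>_. 0}"
    by (subst set_pmf_of_list_eq[OF wf10]) auto
  have b: "set_pmf (pmf_of_list [(unit_vec 3 (i+1), 19/30::real), (\<lambda>_. 0::nat, 11/30)])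
     = {unit_vec 3 (i+1), \<lambda>_. 0}"
    by (subst set_pmf_of_list_eq[OF wfo]) auto
  show ?thesis unfolding offspring_def using a b by simp
qed

lemma pmf_off10:
  "pmf (offspring 10) (unit_vec 4 10) = 2/5" "pmf (offspring 10) (unit_vec 4 11) = 1/5"
  "pmf (offspring 10) (\<lambda>_. 0) = 2/5"
  unfolding offspring_def using wf10 uv_ne0[of 4] uv_ne0'[of 4] uv_inj[of 4 10 11] uv_inj[of 4 11 10]
  by (simp_all add: pmf_pmf_of_list)

lemma pmf_offo: assumes "i \<noteq> 10" shows
  "pmf (offspring i) (unit_vec 3 (Suc i)) = 19/30" "pmf (offspring i) (\<lambda>_. 0) = 11/30"
  unfolding offspring_def using assms wfo[of i] uv_ne0[of 3 "i+1"] uv_ne0'[of 3 "i+1"]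
  by (simp_all add: pmf_pmf_of_list)

lemma nn_int_offspring: fixes f :: "(nat \<Rightarrow> nat) \<Rightarrow> ennreal" shows "(\<integral>\<^sup>+ v. f v \<partial>offspring i) =
  (if i = 10 then ennreal (2/5) * f (unit_vec 4 10) + ennreal (1/5) * f (unit_vec 4 11) + ennreal (2/5) * f (\<lambda>_. 0)
   else ennreal (19/30) * f (unit_vec 3 (i+1)) + ennreal (11/30) * f (\<lambda>_. 0))"
proof -
  have fin: "finite (set_pmf (offspring i))" by (simp add: set_offspring)
  have e: "(\<integral>\<^sup>+ v. f v \<partial>offspring i) = (\<Sum>a\<in>set_pmf (offspring i). f a * ennreal (pmf (offspring i) a))"
    by (rule nn_integral_measure_pmf_finite[OF fin]) simp
  show ?thesis
  proof (cases "i = 10")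
    case True
    have s: "set_pmf (offspring i) = {unit_vec 4 10, unit_vec 4 11, \<lambda>_. 0}" using True by (simp add: set_offspring)
    show ?thesis unfolding e s using True uv_ne0[of 4] uv_ne0'[of 4] uv_inj[of 4 10 11]
      by (simp add: pmf_off10 mult.commute add_ac)
  next
    case False
    have s: "set_pmf (offspring i) = {unit_vec 3 (i+1), \<lambda>_. 0}" using False by (simp add: set_offspring)
    show ?thesis unfolding e s using False uv_ne0[of 3 "i+1"]
      by (simp add: mult.commute add_ac pmf_offo[OF False])
  qed
qed

lemma int_offspring: fixes f :: "(nat \<Rightarrow> nat) \<Rightarrow> real" shows "measure_pmf.expectation (offspring i) f =
  (if i = 10 then (2/5) * f (unit_vec 4 10) + (1/5) * f (unit_vec 4 11) + (2/5) * f (\<lambda>_. 0)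
   else (19/30) * f (unit_vec 3 (i+1)) + (11/30) * f (\<lambda>_. 0))"
proof -
  have fin: "finite (set_pmf (offspring i))" by (simp add: set_offspring)
  have e: "measure_pmf.expectation (offspring i) f = (\<Sum>a\<in>set_pmf (offspring i). pmf (offspring i) a *\<^sub>R f a)"
    by (rule integral_measure_pmf[OF fin]) auto
  show ?thesis
  proof (cases "i = 10")
    case True
    have s: "set_pmf (offspring i) = {unit_vec 4 10, unit_vec 4 11, \<lambda>_. 0}" using True by (simp add: set_offspring)
    show ?thesis unfolding e s using True uv_ne0[of 4] uv_ne0'[of 4] uv_inj[of 4 10 11]
      by (simp add: pmf_off10 add_ac)
  next
    case False
    have s: "set_pmf (offspring i) = {unit_vec 3 (i+1), \<lambda>_. 0}" using False by (simp add: set_offspring)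
    show ?thesis unfolding e s using False uv_ne0[of 3 "i+1"]
      by (simp add: add_ac pmf_offo[OF False])
  qed
qed

lemma mean_matrix_eq: "mean_matrix i j =
  (if i = 10 then (if j = 10 then 8/5 else if j = 11 then 4/5 else 0)
   else if j = i + 1 then 19/10 else 0)"
  unfolding mean_matrix_def int_offspring by auto

lemma trunc_carrier: "trunc_mean k \<in> carrier_mat k k"
  by (simp add: trunc_mean_def)

lemma trunc_ut: "upper_triangular (trunc_mean k)"
  by (rule upper_triangularI) (auto simp: trunc_mean_def mean_matrix_eq)

lemma spectrum_trunc: "spectrum (trunc_mean k) = set (diag_mat (trunc_mean k))"
proof -
  have "spectrum (trunc_mean k) = {x. poly (char_poly (trunc_mean k)) x = 0}"
    by (rule spectrum_root_char_poly[OF trunc_carrier])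
  also have "\<dots> = set (diag_mat (trunc_mean k))"
    unfolding char_poly_upper_triangular[OF trunc_carrier trunc_ut] poly_prod_list_zero_iff
    by auto
  finally show ?thesis .
qed

lemma diag_trunc: "set (diag_mat (trunc_mean k)) = (\<lambda>i. if i = 9 then 8/5 else 0) ` {..<k}"
  by (auto simp: diag_mat_def trunc_mean_def mean_matrix_eq)

lemma sr_trunc: assumes "k \<ge> 10" shows "spectral_radius (trunc_mean k) = 8/5"
proof -
  have "(\<lambda>i. if i = 9 then 8/5 else (0::complex)) ` {..<k} = {8/5, 0}"
    using assms by (auto simp: image_def intro: exI[of _ 0])
  then have "norm ` spectrum (trunc_mean k) = {8/5, 0}"
    unfolding spectrum_trunc diag_trunc by auto
  then show ?thesis unfolding spectral_radius_def by simp
qed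

lemma sr_lim: "(\<lambda>k. spectral_radius (trunc_mean k)) \<longlonglongrightarrow> 8/5"
proof (rule LIMSEQ_offset[where k = 10])
  show "(\<lambda>n. spectral_radius (trunc_mean (n + 10))) \<longlonglongrightarrow> 8/5"
    by (simp add: sr_trunc)
qed




definition Kset :: "(nat \<Rightarrow> nat) \<Rightarrow> (nat \<Rightarrow> nat) set" where
  "Kset z = set_pmf (GW_kernel z)"

fun paths :: "nat \<Rightarrow> nat \<Rightarrow> (nat \<Rightarrow> nat \<Rightarrow> nat) set" where
  "paths i 0 = {\<lambda>m. if m = 0 then unit_vec 1 i else (\<lambda>_. 0)}"
| "paths i (Suc n) = (\<lambda>(h,z). h(Suc n := z)) ` (SIGMA h:paths i n. Kset (h n))"

lemma countable_paths: "countable (paths i n)"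
  by (induction n) (auto simp: Kset_def intro!: countable_image countable_SIGMA)

lemma paths_zero: "h \<in> paths i n \<Longrightarrow> m > n \<Longrightarrow> h m = (\<lambda>_. 0)"
  by (induction n arbitrary: h m) auto

lemma paths_0: "h \<in> paths i n \<Longrightarrow> h 0 = unit_vec 1 i"
  by (induction n arbitrary: h) auto

lemma paths_step: "h \<in> paths i n \<Longrightarrow> m < n \<Longrightarrow> h (Suc m) \<in> Kset (h m)"
proof (induction n arbitrary: h m)
  case 0 then show ?case by simp
next
  case (Suc n)
  then obtain h' z where h: "h = h'(Suc n := z)" "h' \<in> paths i n" "z \<in> Kset (h' n)" by auto
  show ?case
  proof (cases "m = n")
    case True then show ?thesis using h by simp
  next
    case False then have "m < n" using Suc by simp
    then show ?thesis using h Suc.IH[of h' m] by simp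
  qed
qed

lemma paths_ext: "h \<in> paths i n \<Longrightarrow> z \<in> Kset (h n) \<Longrightarrow> h(Suc n := z) \<in> paths i (Suc n)"
  by (force simp: image_iff)

lemma nn_decomp:
  fixes g :: "'a \<Rightarrow> ennreal" and F :: "'i \<Rightarrow> 'a set"
  assumes I: "countable I" and F: "\<And>j. j \<in> I \<Longrightarrow> F j \<in> sets M" and disj: "disjoint_family_on F I"
    and g: "g \<in> borel_measurable M"
    and cover: "AE \<omega> in M. \<omega> \<in> B \<longrightarrow> (\<exists>j\<in>I. \<omega> \<in> F j)" and sub: "\<And>j. j \<in> I \<Longrightarrow> F j \<subseteq> B"
  shows "(\<integral>\<^sup>+\<omega>. g \<omega> * indicator B \<omega> \<partial>M) = (\<integral>\<^sup>+j. \<integral>\<^sup>+\<omega>. g \<omega> * indicator (F j) \<omega> \<partial>M \<partial>count_space I)"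
proof -
  have "(\<integral>\<^sup>+\<omega>. g \<omega> * indicator B \<omega> \<partial>M) = (\<integral>\<^sup>+\<omega>. \<integral>\<^sup>+j. g \<omega> * indicator (F j) \<omega> \<partial>count_space I \<partial>M)"
  proof (rule nn_integral_cong_AE)
    show "AE \<omega> in M. g \<omega> * indicator B \<omega> = (\<integral>\<^sup>+j. g \<omega> * indicator (F j) \<omega> \<partial>count_space I)"
      using cover
    proof eventually_elim
      case (elim \<omega>)
      have "(\<integral>\<^sup>+j. g \<omega> * indicator (F j) \<omega> \<partial>count_space I) = g \<omega> * (\<integral>\<^sup>+j. indicator (F j) \<omega> \<partial>count_space I)"
        by (rule nn_integral_cmult) simp
      also have "(\<integral>\<^sup>+j. indicator (F j) \<omega> \<partial>count_space I) = (\<integral>\<^sup>+j. of_bool (\<omega> \<in> F j) \<partial>count_space I)"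
        by (simp add: indicator_def)
      also have "\<dots> = of_bool (\<exists>j\<in>I. \<omega> \<in> F j)"
        by (rule of_bool_Bex_eq_nn_integral[symmetric]) (use disj in \<open>auto simp: disjoint_family_on_def\<close>)
      also have "(of_bool (\<exists>j\<in>I. \<omega> \<in> F j) :: ennreal) = indicator B \<omega>" using elim sub by (auto simp: indicator_def)
      finally show ?case by simp
    qed
  qed
  also have "\<dots> = (\<integral>\<^sup>+j. \<integral>\<^sup>+\<omega>. g \<omega> * indicator (F j) \<omega> \<partial>M \<partial>count_space I)"
    by (rule nn_integral_count_space_nn_integral[OF I]) (use F g in measurable)
  finally show ?thesis .
qed

locale gwp = prob_space M for M :: "'a measure" +
  fixes Z :: "nat \<Rightarrow> 'a \<Rightarrow> nat \<Rightarrow> nat" and i :: nat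
  assumes meas[measurable]: "\<And>n. Z n \<in> measurable M (count_space UNIV)"
    and init: "AE \<omega> in M. Z 0 \<omega> = unit_vec 1 i"
    and kern: "\<And>n h z. measure M {\<omega> \<in> space M. (\<forall>m\<le>n. Z m \<omega> = h m) \<and> Z (Suc n) \<omega> = z}
        = measure M {\<omega> \<in> space M. \<forall>m\<le>n. Z m \<omega> = h m} * pmf (GW_kernel (h n)) z"

lemma gwpI: "is_GW_process M Z i \<Longrightarrow> gwp M Z i"
  unfolding is_GW_process_def gwp_def gwp_axioms_def by auto

context gwp begin

definition "Aset n h = {\<omega>\<in>space M. \<forall>m\<le>n. Z m \<omega> = h m}"
definition "Eset n h z = {\<omega>\<in>space M. (\<forall>m\<le>n. Z m \<omega> = h m) \<and> Z (Suc n) \<omega> = z}"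

lemma Aset_sets[measurable]: "Aset n h \<in> sets M"
  unfolding Aset_def by measurable

lemma Eset_sets[measurable]: "Eset n h z \<in> sets M"
  unfolding Eset_def by measurable

lemma kern': "measure M (Eset n h z) = measure M (Aset n h) * pmf (GW_kernel (h n)) z"
  unfolding Eset_def Aset_def by (rule kern)

lemma null_bad: "Aset n h - (\<Union>z\<in>Kset (h n). Eset n h z) \<in> null_sets M"
proof -
  let ?K = "Kset (h n)"
  have disj: "disjoint_family_on (Eset n h) ?K"
    by (auto simp: disjoint_family_on_def Eset_def)
  have cK: "countable ?K" by (simp add: Kset_def)
  have "emeasure M (\<Union>z\<in>?K. Eset n h z) = (\<integral>\<^sup>+z. emeasure M (Eset n h z) \<partial>count_space ?K)"
    by (rule emeasure_UN_countable[OF _ cK disj]) simp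
  also have "\<dots> = (\<integral>\<^sup>+z. ennreal (measure M (Aset n h)) * ennreal (pmf (GW_kernel (h n)) z) \<partial>count_space ?K)"
    by (simp add: emeasure_eq_measure kern' ennreal_mult)
  also have "\<dots> = ennreal (measure M (Aset n h)) * (\<integral>\<^sup>+z. ennreal (pmf (GW_kernel (h n)) z) \<partial>count_space ?K)"
    by (rule nn_integral_cmult) simp
  also have "(\<integral>\<^sup>+z. ennreal (pmf (GW_kernel (h n)) z) \<partial>count_space ?K) = emeasure (measure_pmf (GW_kernel (h n))) ?K"
    by (rule nn_integral_pmf)
  also have "\<dots> = 1" unfolding Kset_def
    by (rule measure_pmf.emeasure_eq_1_AE) (auto simp: AE_measure_pmf_iff)
  finally have e: "emeasure M (\<Union>z\<in>?K. Eset n h z) = emeasure M (Aset n h)"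
    by (simp add: emeasure_eq_measure)
  have sub: "(\<Union>z\<in>?K. Eset n h z) \<subseteq> Aset n h" by (auto simp: Eset_def Aset_def)
  have su: "(\<Union>z\<in>?K. Eset n h z) \<in> sets M" by (intro sets.countable_UN'' cK) simp
  have "emeasure M (Aset n h - (\<Union>z\<in>?K. Eset n h z)) = 0"
    by (subst emeasure_Diff[OF _ Aset_sets su sub]) (auto simp: e)
  then show ?thesis using su by (auto intro: null_setsI)
qed

definition "pref n \<omega> = (\<lambda>m. if m \<le> n then Z m \<omega> else (\<lambda>_. 0))"

lemma pref_Aset: "h \<in> paths i n \<Longrightarrow> \<omega> \<in> space M \<Longrightarrow> pref n \<omega> = h \<longleftrightarrow> \<omega> \<in> Aset n h"
  using paths_zero[of h i n] by (auto simp: pref_def Aset_def fun_eq_iff)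

lemma AE_paths_n: "AE \<omega> in M. pref n \<omega> \<in> paths i n"
proof (induction n)
  case 0
  show ?case using init
    by eventually_elim (auto simp: pref_def fun_eq_iff)
next
  case (Suc n)
  have "AE \<omega> in M. \<forall>h\<in>paths i n. \<omega> \<notin> Aset n h - (\<Union>z\<in>Kset (h n). Eset n h z)"
    by (subst AE_ball_countable[OF countable_paths]) (blast intro: AE_not_in null_bad)
  with Suc AE_space show ?case
  proof eventually_elim
    case (elim \<omega>)
    define h where "h = pref n \<omega>"
    have h: "h \<in> paths i n" using elim h_def by simp
    have "\<omega> \<in> Aset n h" using pref_Aset[OF h elim(2)] h_def by simp
    with elim(3) h obtain z where z: "z \<in> Kset (h n)" "\<omega> \<in> Eset n h z" by blast
    then have "Z (Suc n) \<omega> = z" by (simp add: Eset_def)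
    then have "pref (Suc n) \<omega> = h(Suc n := z)" by (auto simp: h_def pref_def fun_eq_iff)
    then show ?case using paths_ext[OF h z(1)] by metis
  qed
qed

lemma paths_pos: "h \<in> paths i n \<Longrightarrow> measure M (Aset n h) > 0"
proof (induction n arbitrary: h)
  case 0
  then have h: "h = (\<lambda>m. if m = 0 then unit_vec 1 i else (\<lambda>_. 0))" by simp
  have "Aset 0 h = {\<omega>\<in>space M. Z 0 \<omega> = unit_vec 1 i}" by (auto simp: Aset_def h)
  moreover have "prob {\<omega>\<in>space M. Z 0 \<omega> = unit_vec 1 i} = 1"
    using init by (subst prob_Collect_eq_1) (auto simp: Aset_def[symmetric])
  ultimately show ?case by simp
next
  case (Suc n)
  then obtain h' z where h: "h = h'(Suc n := z)" "h' \<in> paths i n" "z \<in> Kset (h' n)" by auto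
  have "Aset (Suc n) h = Eset n h' z"
    by (auto simp: Aset_def Eset_def h le_Suc_eq)
  then have "measure M (Aset (Suc n) h) = measure M (Aset n h') * pmf (GW_kernel (h' n)) z"
    by (simp add: kern')
  moreover have "pmf (GW_kernel (h' n)) z > 0" using h(3) by (simp add: Kset_def pmf_positive)
  ultimately show ?case using Suc.IH[OF h(2)] by simp
qed

lemma phiZ_meas[measurable]: "(\<lambda>\<omega>. (\<phi> :: (nat \<Rightarrow> nat) \<Rightarrow> ennreal) (Z n \<omega>)) \<in> borel_measurable M"
  by (rule measurable_compose[OF meas]) simp

lemma decA: fixes f :: "'a \<Rightarrow> ennreal" assumes f: "f \<in> borel_measurable M"
  shows "(\<integral>\<^sup>+\<omega>. f \<omega> \<partial>M) = (\<integral>\<^sup>+h. \<integral>\<^sup>+\<omega>. f \<omega> * indicator (Aset n h) \<omega> \<partial>M \<partial>count_space (paths i n))"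
proof -
  have "(\<integral>\<^sup>+\<omega>. f \<omega> \<partial>M) = (\<integral>\<^sup>+\<omega>. f \<omega> * indicator (space M) \<omega> \<partial>M)"
    by (rule nn_integral_cong) simp
  also have "\<dots> = (\<integral>\<^sup>+h. \<integral>\<^sup>+\<omega>. f \<omega> * indicator (Aset n h) \<omega> \<partial>M \<partial>count_space (paths i n))"
  proof (rule nn_decomp[OF countable_paths])
    show "disjoint_family_on (Aset n) (paths i n)"
      unfolding disjoint_family_on_def
    proof (intro ballI impI)
      fix h h' assume "h \<in> paths i n" "h' \<in> paths i n" "h \<noteq> h'"
      show "Aset n h \<inter> Aset n h' = {}"
      proof (rule equals0I)
        fix x assume x: "x \<in> Aset n h \<inter> Aset n h'"
        then have "x \<in> space M" by (simp add: Aset_def)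
        then show False using x pref_Aset[of h n x] pref_Aset[of h' n x] \<open>h \<in> paths i n\<close> \<open>h' \<in> paths i n\<close> \<open>h \<noteq> h'\<close>
          by auto
      qed
    qed
    show "AE \<omega> in M. \<omega> \<in> space M \<longrightarrow> (\<exists>h\<in>paths i n. \<omega> \<in> Aset n h)"
      using AE_paths_n[of n] by eventually_elim (use pref_Aset in blast)
  qed (auto simp: f Aset_def)
  finally show ?thesis .
qed

lemma markov:
  fixes \<phi> :: "(nat \<Rightarrow> nat) \<Rightarrow> ennreal"
  assumes hyp: "\<And>h. h \<in> paths i n \<Longrightarrow> (\<integral>\<^sup>+v. \<phi> v \<partial>measure_pmf (GW_kernel (h n))) \<le> \<phi> (h n)"
  shows "(\<integral>\<^sup>+\<omega>. \<phi> (Z (Suc n) \<omega>) \<partial>M) \<le> (\<integral>\<^sup>+\<omega>. \<phi> (Z n \<omega>) \<partial>M)"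
proof -
  have "(\<integral>\<^sup>+\<omega>. \<phi> (Z (Suc n) \<omega>) \<partial>M) = (\<integral>\<^sup>+h. \<integral>\<^sup>+\<omega>. \<phi> (Z (Suc n) \<omega>) * indicator (Aset n h) \<omega> \<partial>M \<partial>count_space (paths i n))"
    by (rule decA) simp
  also have "\<dots> \<le> (\<integral>\<^sup>+h. \<integral>\<^sup>+\<omega>. \<phi> (Z n \<omega>) * indicator (Aset n h) \<omega> \<partial>M \<partial>count_space (paths i n))"
  proof (rule nn_integral_mono)
    fix h assume "h \<in> space (count_space (paths i n))"
    then have h: "h \<in> paths i n" by simp
    let ?K = "Kset (h n)" and ?P = "GW_kernel (h n)"
    have "(\<integral>\<^sup>+\<omega>. \<phi> (Z (Suc n) \<omega>) * indicator (Aset n h) \<omega> \<partial>M)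
        = (\<integral>\<^sup>+z. \<integral>\<^sup>+\<omega>. \<phi> (Z (Suc n) \<omega>) * indicator (Eset n h z) \<omega> \<partial>M \<partial>count_space ?K)"
    proof (rule nn_decomp)
      show "countable ?K" by (simp add: Kset_def)
      show "disjoint_family_on (Eset n h) ?K" by (auto simp: disjoint_family_on_def Eset_def)
      show "AE \<omega> in M. \<omega> \<in> Aset n h \<longrightarrow> (\<exists>z\<in>?K. \<omega> \<in> Eset n h z)"
        using AE_not_in[OF null_bad[of n h]] by eventually_elim blast
    qed (auto simp: Eset_def Aset_def)
    also have "\<dots> = (\<integral>\<^sup>+z. \<phi> z * emeasure M (Eset n h z) \<partial>count_space ?K)"
    proof (rule nn_integral_cong)
      fix z
      have "(\<integral>\<^sup>+\<omega>. \<phi> (Z (Suc n) \<omega>) * indicator (Eset n h z) \<omega> \<partial>M) = (\<integral>\<^sup>+\<omega>. \<phi> z * indicator (Eset n h z) \<omega> \<partial>M)"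
        by (rule nn_integral_cong) (auto simp: Eset_def indicator_def)
      also have "\<dots> = \<phi> z * emeasure M (Eset n h z)" by (rule nn_integral_cmult_indicator) simp
      finally show "(\<integral>\<^sup>+\<omega>. \<phi> (Z (Suc n) \<omega>) * indicator (Eset n h z) \<omega> \<partial>M) = \<phi> z * emeasure M (Eset n h z)" .
    qed
    also have "\<dots> = (\<integral>\<^sup>+z. ennreal (measure M (Aset n h)) * (ennreal (pmf ?P z) * \<phi> z) \<partial>count_space ?K)"
      by (rule nn_integral_cong) (simp add: emeasure_eq_measure kern' ennreal_mult mult_ac)
    also have "\<dots> = ennreal (measure M (Aset n h)) * (\<integral>\<^sup>+z. ennreal (pmf ?P z) * \<phi> z \<partial>count_space ?K)"
      by (rule nn_integral_cmult) simp
    also have "(\<integral>\<^sup>+z. ennreal (pmf ?P z) * \<phi> z \<partial>count_space ?K) = (\<integral>\<^sup>+v. \<phi> v \<partial>measure_pmf ?P)"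
    proof -
      have "(\<integral>\<^sup>+z. ennreal (pmf ?P z) * \<phi> z \<partial>count_space ?K)
          = (\<integral>\<^sup>+z. ennreal (pmf ?P z) * \<phi> z * indicator ?K z \<partial>count_space UNIV)"
        by (rule nn_integral_count_space_indicator) (simp add: NO_MATCH_def)
      also have "\<dots> = (\<integral>\<^sup>+z. ennreal (pmf ?P z) * \<phi> z \<partial>count_space UNIV)"
        by (rule nn_integral_cong) (auto simp: indicator_def Kset_def set_pmf_eq)
      also have "\<dots> = (\<integral>\<^sup>+v. \<phi> v \<partial>measure_pmf ?P)"
        by (rule nn_integral_measure_pmf[symmetric])
      finally show ?thesis .
    qed
    also have "ennreal (measure M (Aset n h)) * (\<integral>\<^sup>+v. \<phi> v \<partial>measure_pmf ?P) \<le> ennreal (measure M (Aset n h)) * \<phi> (h n)"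
      by (rule mult_left_mono[OF hyp[OF h]]) simp
    also have "\<dots> = (\<integral>\<^sup>+\<omega>. \<phi> (h n) * indicator (Aset n h) \<omega> \<partial>M)"
      by (subst nn_integral_cmult_indicator) (simp_all add: emeasure_eq_measure mult_ac)
    also have "\<dots> = (\<integral>\<^sup>+\<omega>. \<phi> (Z n \<omega>) * indicator (Aset n h) \<omega> \<partial>M)"
      by (rule nn_integral_cong) (auto simp: Aset_def indicator_def)
    finally show "(\<integral>\<^sup>+\<omega>. \<phi> (Z (Suc n) \<omega>) * indicator (Aset n h) \<omega> \<partial>M) \<le> (\<integral>\<^sup>+\<omega>. \<phi> (Z n \<omega>) * indicator (Aset n h) \<omega> \<partial>M)" .
  qed
  also have "\<dots> = (\<integral>\<^sup>+\<omega>. \<phi> (Z n \<omega>) \<partial>M)"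
    by (rule decA[symmetric]) simp
  finally show ?thesis .
qed

end



lemma set_conv: "set_pmf (conv_pmf p r) = {(\<lambda>l. a l + b l) | a b. a \<in> set_pmf p \<and> b \<in> set_pmf r}"
  by (auto simp: conv_pmf_def)

lemma conv_return0: "conv_pmf (return_pmf (\<lambda>_. 0)) p = p"
  by (simp add: conv_pmf_def bind_return_pmf map_pmf_ident)

lemma conv_pow_closed:
  assumes "Q (\<lambda>_. 0)" "\<And>a b. Q a \<Longrightarrow> Q b \<Longrightarrow> Q (\<lambda>l. a l + b l)" "\<And>v. v \<in> set_pmf p \<Longrightarrow> Q v"
  shows "v \<in> set_pmf (conv_pow c p) \<Longrightarrow> Q v"
  using assms by (induction c arbitrary: v) (auto simp: set_conv)

lemma gen_closed:
  assumes "Q (\<lambda>_. 0)" "\<And>a b. Q a \<Longrightarrow> Q b \<Longrightarrow> Q (\<lambda>l. a l + b l)"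
    "\<And>j v. j < N \<Longrightarrow> v \<in> set_pmf (conv_pow (z j) (offspring j)) \<Longrightarrow> Q v"
  shows "v \<in> set_pmf (gen_pmf N z) \<Longrightarrow> Q v"
  using assms
proof (induction N arbitrary: v)
  case 0 then show ?case by simp
next
  case (Suc N)
  from Suc.prems(1) obtain a b where ab: "v = (\<lambda>l. a l + b l)" "a \<in> set_pmf (gen_pmf N z)"
    "b \<in> set_pmf (conv_pow (z N) (offspring N))" by (auto simp: set_conv)
  have "Q a" using Suc.IH[OF ab(2) Suc.prems(2,3)] Suc.prems(4) by (meson less_SucI)
  moreover have "Q b" using Suc.prems(4)[OF _ ab(3)] by simp
  ultimately show ?case using ab(1) Suc.prems(3) by simp
qed

definition Sset :: "nat \<Rightarrow> (nat \<Rightarrow> nat) set" where "Sset t = {v. \<forall>l. l \<noteq> t \<longrightarrow> v l = 0}"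

lemma Kset_S: assumes z: "z \<in> Sset t" and t: "t \<noteq> 10" shows "Kset z \<subseteq> Sset (Suc t)"
proof
  fix v assume "v \<in> Kset z"
  then have v: "v \<in> set_pmf (gen_pmf (LEAST N. \<forall>l\<ge>N. z l = 0) z)" by (simp add: Kset_def GW_kernel_def)
  show "v \<in> Sset (Suc t)"
  proof (rule gen_closed[where Q = "\<lambda>v. v \<in> Sset (Suc t)", OF _ _ _ v])
    fix j w assume w: "w \<in> set_pmf (conv_pow (z j) (offspring j))"
    show "w \<in> Sset (Suc t)"
    proof (cases "j = t")
      case True
      show ?thesis
        by (rule conv_pow_closed[OF _ _ _ w]) (use True t in \<open>auto simp: Sset_def set_offspring\<close>)
    next
      case False
      then have "z j = 0" using z by (simp add: Sset_def)
      then show ?thesis using w by (simp add: Sset_def)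
    qed
  qed (auto simp: Sset_def)
qed

lemma Kset_fin: assumes "v \<in> Kset z" shows "\<exists>N. \<forall>l\<ge>N. v l = 0"
proof -
  define N where "N = (LEAST N. \<forall>l\<ge>N. z l = 0)"
  have v: "v \<in> set_pmf (gen_pmf N z)" using assms by (simp add: Kset_def GW_kernel_def N_def)
  have "\<forall>l>N. v l = 0"
  proof (rule gen_closed[where Q = "\<lambda>v. \<forall>l>N. v l = 0", OF _ _ _ v])
    fix j w assume j: "j < N" and w: "w \<in> set_pmf (conv_pow (z j) (offspring j))"
    show "\<forall>l>N. w l = 0"
      by (rule conv_pow_closed[OF _ _ _ w]) (use j in \<open>auto simp: set_offspring split: if_splits\<close>)
  qed auto
  then show ?thesis by (intro exI[of _ "Suc N"]) auto
qed

lemma gen_return0: "(\<And>j. j < N \<Longrightarrow> z j = 0) \<Longrightarrow> gen_pmf N z = return_pmf (\<lambda>_. 0)"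
  by (induction N) (auto simp: conv_return0)

lemma conv_pow_uv: "t \<noteq> 10 \<Longrightarrow> unit_vec (3 * c) (Suc t) \<in> set_pmf (conv_pow c (offspring t))"
proof (induction c)
  case 0 then show ?case by (simp add: unit_vec_def)
next
  case (Suc c)
  have "unit_vec (3 * Suc c) (Suc t) = (\<lambda>l. unit_vec (3 * c) (Suc t) l + unit_vec 3 (Suc t) l)"
    by (auto simp: fun_eq_iff)
  moreover have "unit_vec 3 (Suc t) \<in> set_pmf (offspring t)" using Suc.prems by (simp add: set_offspring)
  ultimately show ?case using Suc
    apply (simp only: conv_pow.simps set_conv)
    by blast
qed

lemma Kset_step: assumes "c > 0" "t \<noteq> 10" shows "unit_vec (3 * c) (Suc t) \<in> Kset (unit_vec c t)"
proof -
  have L: "(LEAST N. \<forall>l\<ge>N. unit_vec c t l = 0) = Suc t"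
  proof (rule Least_equality)
    show "\<forall>l\<ge>Suc t. unit_vec c t l = 0" by simp
    fix y assume "\<forall>l\<ge>y. unit_vec c t l = (0::nat)"
    then show "Suc t \<le> y" using assms(1) by (cases "t \<ge> y") (auto dest: spec[of _ t])
  qed
  have "gen_pmf t (unit_vec c t) = return_pmf (\<lambda>_. 0)" by (rule gen_return0) simp
  then have "GW_kernel (unit_vec c t) = conv_pow c (offspring t)"
    unfolding GW_kernel_def L by (simp add: conv_return0)
  then show ?thesis using conv_pow_uv[OF assms(2)] by (simp add: Kset_def)
qed




definition phi :: "(nat \<Rightarrow> nat) \<Rightarrow> ennreal" where "phi v = ennreal ((9/10) ^ v 10)"
definition gf :: "(nat \<Rightarrow> nat) pmf \<Rightarrow> ennreal" where "gf p = (\<integral>\<^sup>+v. phi v \<partial>measure_pmf p)"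

lemma phi_add: "phi (\<lambda>l. a l + b l) = phi a * phi b"
  by (simp add: phi_def power_add ennreal_mult)

lemma phi_le1: "phi v \<le> 1"
  by (simp add: phi_def power_le_one)

lemma gf_conv: "gf (conv_pmf p r) = gf p * gf r"
proof -
  have "gf (conv_pmf p r) = (\<integral>\<^sup>+a. \<integral>\<^sup>+b. phi a * phi b \<partial>measure_pmf r \<partial>measure_pmf p)"
    by (simp add: gf_def conv_pmf_def phi_add)
  also have "\<dots> = (\<integral>\<^sup>+a. phi a * gf r \<partial>measure_pmf p)"
    by (simp add: gf_def nn_integral_cmult)
  also have "\<dots> = gf p * gf r"
    by (simp add: gf_def nn_integral_multc)
  finally show ?thesis .
qed

lemma gf_return: "gf (return_pmf x) = phi x"
  by (simp add: gf_def)

lemma gf_pow: "gf (conv_pow c p) = gf p ^ c"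
  by (induction c) (simp_all add: gf_conv gf_return phi_def mult.commute)

lemma gf_gen: "gf (gen_pmf N z) = (\<Prod>j<N. gf (offspring j) ^ z j)"
  by (induction N) (simp_all add: gf_conv gf_return gf_pow phi_def)

lemma gf_off_le1: "gf (offspring j) \<le> 1"
proof -
  have "gf (offspring j) \<le> (\<integral>\<^sup>+v. 1 \<partial>measure_pmf (offspring j))"
    unfolding gf_def by (rule nn_integral_mono) (simp add: phi_le1)
  then show ?thesis by simp
qed

lemma gf_off10: "gf (offspring 10) \<le> ennreal (9/10)"
proof -
  have "gf (offspring 10) = ennreal (2/5) * ennreal ((9/10)^4) + ennreal (1/5) * 1 + ennreal (2/5) * 1"
    unfolding gf_def nn_int_offspring by (simp add: phi_def)
  also have "\<dots> = ennreal (2/5 * (9/10)^4 + 1/5 + 2/5)"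
    by (simp add: ennreal_mult[symmetric] ennreal_plus[symmetric] del: ennreal_plus)
  also have "\<dots> \<le> ennreal (9/10)" by (rule ennreal_leI) (simp add: eval_nat_numeral)
  finally show ?thesis .
qed

lemma prod_mono_ennreal: fixes f g :: "'b \<Rightarrow> ennreal"
  shows "(\<And>j. j \<in> A \<Longrightarrow> f j \<le> g j) \<Longrightarrow> prod f A \<le> prod g A"
  by (induction A rule: infinite_finite_induct) (auto intro: mult_mono)

lemma kernel_le: assumes fin: "\<exists>N. \<forall>l\<ge>N. z l = 0" shows "gf (GW_kernel z) \<le> phi z"
proof -
  define N where "N = (LEAST N. \<forall>l\<ge>N. z l = 0)"
  have N: "\<forall>l\<ge>N. z l = 0" unfolding N_def using fin by (rule LeastI_ex)
  have e: "gf (GW_kernel z) = (\<Prod>j<N. gf (offspring j) ^ z j)"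
    by (simp add: GW_kernel_def N_def gf_gen)
  have "(\<Prod>j<N. gf (offspring j) ^ z j) \<le> (\<Prod>j<N. if j = 10 then ennreal (9/10) ^ z 10 else 1)"
  proof (rule prod_mono_ennreal)
    fix j assume "j \<in> {..<N}"
    show "gf (offspring j) ^ z j \<le> (if j = 10 then ennreal (9/10) ^ z 10 else 1)"
      using gf_off10 gf_off_le1[of j] by (auto intro: power_mono power_le_one)
  qed
  also have "\<dots> \<le> phi z"
  proof (cases "10 < N")
    case True
    then show ?thesis by (simp add: prod.delta phi_def ennreal_power)
  next
    case False
    then have "z 10 = 0" using N by simp
    then show ?thesis by (simp add: prod.delta phi_def)
  qed
  finally show ?thesis using e by simp
qed




lemma paths_S: "h \<in> paths i n \<Longrightarrow> i \<ge> 11 \<Longrightarrow> h n \<in> Sset (i + n)"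
proof (induction n arbitrary: h)
  case 0 then show ?case by (auto simp: Sset_def)
next
  case (Suc n)
  then obtain h' z where h: "h = h'(Suc n := z)" "h' \<in> paths i n" "z \<in> Kset (h' n)" by auto
  have "z \<in> Sset (Suc (i + n))" using Kset_S[OF Suc.IH[OF h(2) Suc.prems(2)]] h(3) Suc.prems(2) by auto
  then show ?case using h by simp
qed

lemma paths_fin: "h \<in> paths i n \<Longrightarrow> \<exists>N. \<forall>l\<ge>N. h n l = 0"
proof (induction n arbitrary: h)
  case 0 then show ?case by (auto intro!: exI[of _ "Suc i"])
next
  case (Suc n)
  then obtain h' z where h: "h = h'(Suc n := z)" "h' \<in> paths i n" "z \<in> Kset (h' n)" by auto
  then show ?case using Kset_fin[OF h(3)] by simp
qed

lemma paths_special: "n \<le> 10 - i \<Longrightarrow> i \<le> 10 \<Longrightarrow>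
  (\<lambda>m. if m \<le> n then unit_vec (3^m) (i+m) else (\<lambda>_. 0)) \<in> paths i n"
proof (induction n)
  case 0
  have "(\<lambda>m. if m \<le> 0 then unit_vec (3^m) (i+m) else (\<lambda>_. 0)) = (\<lambda>m. if m = 0 then unit_vec 1 i else (\<lambda>_. 0))"
    by (auto simp: fun_eq_iff)
  then show ?case by simp
next
  case (Suc n)
  let ?h = "\<lambda>m. if m \<le> n then unit_vec (3^m) (i+m) else (\<lambda>_. 0)"
  have h: "?h \<in> paths i n" using Suc by simp
  have "unit_vec (3 * 3^n) (Suc (i+n)) \<in> Kset (unit_vec (3^n) (i+n))"
    by (rule Kset_step) (use Suc.prems in auto)
  then have "unit_vec (3^Suc n) (i + Suc n) \<in> Kset (?h n)" by simp
  from paths_ext[OF h this] have mem: "?h(Suc n := unit_vec (3^Suc n) (i + Suc n)) \<in> paths i (Suc n)" .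
  have eq: "?h(Suc n := unit_vec (3^Suc n) (i + Suc n)) = (\<lambda>m. if m \<le> Suc n then unit_vec (3^m) (i+m) else (\<lambda>_. 0))"
  proof (rule ext)
    fix m show "(?h(Suc n := unit_vec (3^Suc n) (i + Suc n))) m = (if m \<le> Suc n then unit_vec (3^m) (i+m) else (\<lambda>_. 0))"
      by (cases "m = Suc n") (simp_all add: le_Suc_eq del: uv_apply)
  qed
  show ?case using mem unfolding eq .
qed

context gwp begin

lemma Zpred: "Measurable.pred M (\<lambda>\<omega>. P (Z n \<omega>))"
  by (rule measurable_compose[OF meas]) simp

lemma PE_eq: "partial_extinction M Z = {\<omega>\<in>space M. \<forall>l. \<exists>N. \<forall>n\<ge>N. Z n \<omega> l = 0}"
  unfolding partial_extinction_def tendsto_discrete eventually_sequentially by simp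

lemma PE_sets: "partial_extinction M Z \<in> sets M"
proof -
  have base: "{\<omega>\<in>space M. Z n \<omega> l = 0} \<in> sets M" for n l
    using Zpred[of "\<lambda>f. f l = 0" n] by (simp add: pred_def)
  have key: "(\<exists>N. \<forall>n\<ge>N. Z n \<omega> l = 0) \<longleftrightarrow> (\<exists>N. \<forall>n. Z (n + N) \<omega> l = 0)" for \<omega> l
  proof
    assume "\<exists>N. \<forall>n\<ge>N. Z n \<omega> l = 0"
    then obtain N where N: "\<forall>n\<ge>N. Z n \<omega> l = 0" ..
    have "\<forall>n. Z (n + N) \<omega> l = 0"
    proof
      fix n show "Z (n + N) \<omega> l = 0" using N[rule_format, OF le_add2] .
    qed
    then show "\<exists>N. \<forall>n. Z (n + N) \<omega> l = 0" ..
  next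
    assume "\<exists>N. \<forall>n. Z (n + N) \<omega> l = 0"
    then obtain N where N: "\<forall>n. Z (n + N) \<omega> l = 0" ..
    have "\<forall>n\<ge>N. Z n \<omega> l = 0"
    proof (intro allI impI)
      fix n assume "N \<le> n"
      then have "n = (n - N) + N" by simp
      then show "Z n \<omega> l = 0" using N[rule_format, of "n - N"] by simp
    qed
    then show "\<exists>N. \<forall>n\<ge>N. Z n \<omega> l = 0" ..
  qed
  have eq: "{\<omega>\<in>space M. \<forall>l. \<exists>N. \<forall>n\<ge>N. Z n \<omega> l = 0} =
      space M \<inter> (\<Inter>l. \<Union>N. \<Inter>n. {\<omega>\<in>space M. Z (n + N) \<omega> l = 0})"
    unfolding set_eq_iff by (simp only: key) simp
  have "(\<Inter>l. \<Union>N. \<Inter>n. {\<omega>\<in>space M. Z (n + N) \<omega> l = 0}) \<in> sets M"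
    using base by (intro sets.countable_INT sets.countable_UN) auto
  then show ?thesis unfolding PE_eq eq by simp
qed

lemma AE_Z_paths: "AE \<omega> in M. \<forall>n. \<exists>h\<in>paths i n. Z n \<omega> = h n"
proof -
  have "AE \<omega> in M. \<forall>n. pref n \<omega> \<in> paths i n"
    using AE_paths_n by (simp add: AE_all_countable)
  then show ?thesis
  proof eventually_elim
    case (elim \<omega>)
    show ?case
    proof
      fix n
      have "pref n \<omega> \<in> paths i n" using elim by blast
      moreover have "pref n \<omega> n = Z n \<omega>" by (simp add: pref_def)
      ultimately show "\<exists>h\<in>paths i n. Z n \<omega> = h n" by (intro bexI[where x="pref n \<omega>"]) simp_all
    qed
  qed
qed

lemma part3: assumes "i \<ge> 11" shows "measure M (partial_extinction M Z) = 1"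
proof -
  have "AE \<omega> in M. \<forall>l. \<exists>N. \<forall>n\<ge>N. Z n \<omega> l = 0"
    using AE_Z_paths
  proof eventually_elim
    case (elim \<omega>)
    have S: "Z n \<omega> \<in> Sset (i + n)" for n
    proof -
      have "\<exists>h\<in>paths i n. Z n \<omega> = h n" using elim by (rule spec)
      then obtain h where h: "h \<in> paths i n" "Z n \<omega> = h n" by (rule bexE)
      show ?thesis unfolding h(2) by (rule paths_S[OF h(1) assms])
    qed
    show ?case
    proof
      fix l show "\<exists>N. \<forall>n\<ge>N. Z n \<omega> l = 0"
      proof (intro exI[of _ "Suc l"] allI impI)
        fix n assume "Suc l \<le> n"
        then have "l \<noteq> i + n" by simp
        then show "Z n \<omega> l = 0" using S[of n] unfolding Sset_def by simp
      qed
    qed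
  qed
  then have "prob {\<omega>\<in>space M. \<forall>l. \<exists>N. \<forall>n\<ge>N. Z n \<omega> l = 0} = 1"
    using prob_Collect_eq_1[OF PE_sets[unfolded PE_eq]] by simp
  then show ?thesis unfolding PE_eq .
qed

lemma Zset: "{\<omega>\<in>space M. Z n \<omega> l = 0} \<in> sets M"
  using Zpred[of "\<lambda>f. f l = 0" n] by (simp add: pred_def)

lemma part2: assumes i1: "1 \<le> i" and i10: "i \<le> 10" shows "measure M (partial_extinction M Z) < 1"
proof -
  define n0 where "n0 = 10 - i"
  define hs where "hs = (\<lambda>m. if m \<le> n0 then unit_vec (3^m) (i+m) else (\<lambda>_. (0::nat)))"
  have hs: "hs \<in> paths i n0" unfolding hs_def by (rule paths_special) (simp_all add: n0_def i10)
  define A where "A = Aset n0 hs"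
  have A[measurable]: "A \<in> sets M" by (simp add: A_def)
  define p where "p = measure M A"
  have p0: "0 < p" using paths_pos[OF hs] by (simp add: p_def A_def)
  have p1: "p \<le> 1" by (simp add: p_def)
  define c where "c = 9/10 * p + (1 - p)"
  have c1: "c < 1" using p0 by (simp add: c_def)
  have c0: "0 \<le> c" using p1 p0 by (simp add: c_def)
  define a where "a n = (\<integral>\<^sup>+\<omega>. phi (Z n \<omega>) \<partial>M)" for n
  have step: "a (Suc n) \<le> a n" for n
    unfolding a_def
  proof (rule markov)
    fix h assume h: "h \<in> paths i n"
    show "(\<integral>\<^sup>+v. phi v \<partial>measure_pmf (GW_kernel (h n))) \<le> phi (h n)"
      using kernel_le[OF paths_fin[OF h]] by (simp add: gf_def)
  qed
  have dec: "decseq a" by (rule decseq_SucI) (rule step)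
  have an0: "a n0 \<le> ennreal c"
  proof -
    have "a n0 \<le> (\<integral>\<^sup>+\<omega>. ennreal (9/10) * indicator A \<omega> + indicator (space M - A) \<omega> \<partial>M)"
      unfolding a_def
    proof (rule nn_integral_mono)
      fix \<omega> assume w: "\<omega> \<in> space M"
      show "phi (Z n0 \<omega>) \<le> ennreal (9/10) * indicator A \<omega> + indicator (space M - A) \<omega>"
      proof (cases "\<omega> \<in> A")
        case True
        then have "Z n0 \<omega> = hs n0" by (simp add: A_def Aset_def)
        also have "hs n0 = unit_vec (3^n0) 10" using i10 by (simp add: hs_def n0_def)
        finally have "phi (Z n0 \<omega>) = ennreal ((9/10) ^ (3^n0))" by (simp add: phi_def)
        also have "\<dots> \<le> ennreal ((9/10) ^ 1)"
          by (rule ennreal_leI, rule power_decreasing) simp_all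
        finally show ?thesis using True by simp
      next
        case False
        then show ?thesis using w phi_le1[of "Z n0 \<omega>"] by simp
      qed
    qed
    also have "\<dots> = ennreal (9/10) * emeasure M A + emeasure M (space M - A)"
      by (subst nn_integral_add) (simp_all add: nn_integral_cmult_indicator)
    also have "\<dots> = ennreal (9/10 * p) + ennreal (1 - p)"
      by (simp add: emeasure_eq_measure prob_compl p_def ennreal_mult'[symmetric])
    also have "\<dots> = ennreal (9/10 * p + (1 - p))"
      by (rule ennreal_plus[symmetric]) (use p0 p1 in simp_all)
    also have "\<dots> = ennreal c" by (simp add: c_def)
    finally show ?thesis .
  qed
  have bound: "emeasure M {\<omega>\<in>space M. Z N \<omega> 10 = 0} \<le> ennreal c" if N: "n0 \<le> N" for N
  proof -
    have "emeasure M {\<omega>\<in>space M. Z N \<omega> 10 = 0} = (\<integral>\<^sup>+\<omega>. indicator {\<omega>\<in>space M. Z N \<omega> 10 = 0} \<omega> \<partial>M)"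
      by (rule nn_integral_indicator[symmetric]) (rule Zset)
    also have "\<dots> \<le> a N" unfolding a_def
      by (rule nn_integral_mono) (auto simp: indicator_def phi_def)
    also have "\<dots> \<le> a n0" using dec N by (simp add: decseqD)
    finally show ?thesis using an0 by simp
  qed
  define D where "D N = {\<omega>\<in>space M. \<forall>n. N \<le> n \<longrightarrow> Z n \<omega> 10 = 0}" for N
  have D[measurable]: "D N \<in> sets M" for N
    unfolding D_def
    by (rule sets.sets_Collect_countable_All, rule sets.sets_Collect_imp, rule Zset, rule sets.sets_Collect_const)
  have mD: "measure M (D N) \<le> c" for N
  proof -
    have "D N \<subseteq> {\<omega>\<in>space M. Z (max N n0) \<omega> 10 = 0}" by (auto simp: D_def)
    then have "emeasure M (D N) \<le> emeasure M {\<omega>\<in>space M. Z (max N n0) \<omega> 10 = 0}"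
      by (rule emeasure_mono) (rule Zset)
    also have "\<dots> \<le> ennreal c" by (rule bound) simp
    finally show ?thesis using c0 by (simp add: emeasure_eq_measure)
  qed
  have inc: "incseq D" by (auto simp: incseq_def D_def)
  have lim: "(\<lambda>N. measure M (D N)) \<longlonglongrightarrow> measure M (\<Union>N. D N)"
    by (rule finite_Lim_measure_incseq) (use inc D in auto)
  have mU: "measure M (\<Union>N. D N) \<le> c"
    by (rule LIMSEQ_le_const2[OF lim]) (simp add: mD)
  have sub: "partial_extinction M Z \<subseteq> (\<Union>N. D N)"
    unfolding PE_eq D_def by auto
  have "measure M (partial_extinction M Z) \<le> measure M (\<Union>N. D N)"
    by (rule finite_measure_mono[OF sub]) simp
  then show ?thesis using mU c1 by simp
qed

end

theorem mainTheorem12: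
  shows "(\<lambda>k. spectral_radius (trunc_mean k)) \<longlonglongrightarrow> 8/5 \<and> (8/5 :: real) > 1
    \<and> (\<forall>(M :: 'a measure) Z i. is_GW_process M Z i \<and> 1 \<le> i \<and> i \<le> 10
          \<longrightarrow> measure M (partial_extinction M Z) < 1)
    \<and> (\<forall>(M :: 'a measure) Z i. is_GW_process M Z i \<and> 11 \<le> i
          \<longrightarrow> measure M (partial_extinction M Z) = 1)"
  using sr_lim gwp.part2[OF gwpI] gwp.part3[OF gwpI] by auto


end
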